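(* Let $\mathcal H_1,\mathcal H_2$ be real Hilbert spaces, $\chi\in]0,+\infty[$, $\boldsymbol f\in\Gamma_0(\mathcal H_1\oplus\mathcal H_2)$, and let $\boldsymbol{\mathcal L}:\mathcal H_1\oplus\mathcal H_2\to\mathbb R$ be differentiable with $\chi$-Lipschitzian gradient, such that $\boldsymbol{\mathcal L}(x_1,\cdot)$ is concave for every $x_1\in\mathcal H_1$ and $\boldsymbol{\mathcal L}(\cdot,x_2)$ is convex for every $x_2\in\mathcal H_2$. Suppose there exists $(z_1,z_2)$ with $\big(-\nabla_1\boldsymbol{\mathcal L}(z_1,z_2),\nabla_2\boldsymbol{\mathcal L}(z_1,z_2)\big)\in\partial\boldsymbol f(z_1,z_2)$. Let $\varepsilon\in]0,1/(\chi+1)[$, let $(\gamma_n)_{n\in\mathbb N}$ be a sequence in $[\varepsilon,(1-\varepsilon)/\chi]$, let $(x_{1,0},x_{2,0})\in\mathcal H_1\oplus\mathcal H_2$, and for $i\in\{1,2\}$ let $(a_{i,n})_n,(b_{i,n})_n,(c_{i,n})_n$ be absolutely summable sequences in $\mathcal H_i$. For every $n$ define $y_{1,n}=x_{1,n}-\gamma_n(\nabla_1\boldsymbol{\mathcal L}(x_{1,n},x_{2,n})+a_{1,n})$, $y_{2,n}=x_{2,n}+\gamma_n(\nabla_2\boldsymbol{\mathcal L}(x_{1,n},x_{2,n})+a_{2,n})$, $(p_{1,n},p_{2,n})=\operatorname{prox}_{\gamma_n\boldsymbol f}(y_{1,n},y_{2,n})+(b_{1,n},b_{2,n})$, $q_{1,n}=p_{1,n}-\gamma_n(\nabla_1\boldsymbol{\mathcal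 L}(p_{1,n},p_{2,n})+c_{1,n})$, $q_{2,n}=p_{2,n}+\gamma_n(\nabla_2\boldsymbol{\mathcal L}(p_{1,n},p_{2,n})+c_{2,n})$, $x_{1,n+1}=x_{1,n}-y_{1,n}+q_{1,n}$, $x_{2,n+1}=x_{2,n}-y_{2,n}+q_{2,n}$. Then there exist $(\overline x_1,\overline x_2)$ with $\overline x_1\in\operatorname{Argmin}_{x\in\mathcal H_1}\big(\boldsymbol f(x,\overline x_2)+\boldsymbol{\mathcal L}(x,\overline x_2)\big)$ and $\overline x_2\in\operatorname{Argmin}_{x\in\mathcal H_2}\big(\boldsymbol f(\overline x_1,x)-\boldsymbol{\mathcal L}(\overline x_1,x)\big)$, such that $x_{1,n}\rightharpoonup\overline x_1$, $p_{1,n}\rightharpoonup\overline x_1$, $x_{2,n}\rightharpoonup\overline x_2$, $p_{2,n}\rightharpoonup\overline x_2$.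
   Context: $\Gamma_0(\mathcal K)$ denotes the proper lower semicontinuous convex functions $\mathcal K\to\left]-\infty,+\infty\right]$; $\partial$ denotes the subdifferential; $\mathcal H_1\oplus\mathcal H_2$ is the product Hilbert space with inner product $\langle x_1,y_1\rangle+\langle x_2,y_2\rangle$. $\nabla_i\boldsymbol{\mathcal L}(x_1,x_2)$ is the partial gradient with respect to the $i$-th variable. For $\varphi\in\Gamma_0(\mathcal K)$, $\operatorname{prox}_\varphi x=\operatorname{argmin}_y\big(\varphi(y)+\tfrac12\|x-y\|^2\big)$. $\rightharpoonup$ denotes weak convergence. *)

theory Defs
  imports "HOL-Analysis.Analysis"
begin

definition proper_fun :: "('a \<Rightarrow> ereal) \<Rightarrow> bool" where
  "proper_fun f \<longleftrightarrow> (\<forall>x. f x \<noteq> -\<infinity>) \<and> (\<exists>x. f x \<noteq> \<infinity>)"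

definition ereal_convex :: "('a::real_vector \<Rightarrow> ereal) \<Rightarrow> bool" where
  "ereal_convex f \<longleftrightarrow> (\<forall>x y t. 0 < t \<and> t < 1 \<longrightarrow>
      f ((1 - t) *\<^sub>R x + t *\<^sub>R y) \<le> ereal (1 - t) * f x + ereal t * f y)"

definition lsc :: "('a::topological_space \<Rightarrow> ereal) \<Rightarrow> bool" where
  "lsc f \<longleftrightarrow> (\<forall>c. closed {x. f x \<le> c})"

definition Gamma0 :: "('a::real_normed_vector \<Rightarrow> ereal) \<Rightarrow> bool" where
  "Gamma0 f \<longleftrightarrow> proper_fun f \<and> ereal_convex f \<and> lsc f"

definition subdiff :: "('a::real_inner \<Rightarrow> ereal) \<Rightarrow> 'a \<Rightarrow> 'a set" where
  "subdiff f x = {u. \<forall>y. f x + ereal (inner (y - x) u) \<le> f y}"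

definition prox :: "('a::real_inner \<Rightarrow> ereal) \<Rightarrow> 'a \<Rightarrow> 'a" where
  "prox \<phi> x = (THE p. \<forall>y. \<phi> p + ereal ((norm (x - p))\<^sup>2 / 2) \<le> \<phi> y + ereal ((norm (x - y))\<^sup>2 / 2))"

definition Argmin :: "('a \<Rightarrow> 'b::order) \<Rightarrow> 'a set" where
  "Argmin g = {x. \<forall>y. g x \<le> g y}"

definition weak_conv :: "(nat \<Rightarrow> 'a::real_inner) \<Rightarrow> 'a \<Rightarrow> bool" where
  "weak_conv X x \<longleftrightarrow> (\<forall>y. (\<lambda>n. inner (X n) y) \<longlonglongrightarrow> inner x y)"

end

theory Submission
  imports Defs "HOL-Library.Diagonal_Subsequence" "HOL-Library.Infinite_Set"
begin



lemma norm_mid_identity: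
  fixes y a b :: "'h::real_inner"
  shows "(norm (y - ((1/2) *\<^sub>R a + (1/2) *\<^sub>R b)))\<^sup>2
       = (norm (y - a))\<^sup>2 / 2 + (norm (y - b))\<^sup>2 / 2 - (norm (a - b))\<^sup>2 / 4"
  unfolding power2_norm_eq_inner
  apply (simp add: inner_diff_left inner_diff_right inner_add_left
      inner_add_right inner_commute algebra_simps)
  apply (simp add: field_simps)
  done

lemma norm_line_identity:
  fixes y p x :: "'h::real_inner"
  shows "(norm (y - ((1 - t) *\<^sub>R p + t *\<^sub>R x)))\<^sup>2
       = (norm (y - p))\<^sup>2 - 2 * t * inner (x - p) (y - p) + t\<^sup>2 * (norm (x - p))\<^sup>2"
  unfolding power2_norm_eq_inner
  by (simp add: inner_diff_left inner_diff_right inner_add_left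
      inner_add_right inner_commute algebra_simps power2_eq_square)

lemma norm_gap_identity:
  fixes y p x :: "'h::real_inner"
  shows "(norm (y - x))\<^sup>2 = (norm (y - p))\<^sup>2 - 2 * inner (x - p) (y - p) + (norm (x - p))\<^sup>2"
  unfolding power2_norm_eq_inner
  by (simp add: inner_diff_left inner_diff_right inner_commute algebra_simps)

lemma aux_alg:
  fixes hp gp n0 t gx I N dd :: real
  assumes "hp = gp + n0/2" "dd = gp + I - gx"
  shows "hp \<le> (1-t)*gp + t*gx + (n0 - 2*t*I + t\<^sup>2*N)/2 \<Longrightarrow> 0 \<le> t*(t*N - 2*dd)"
proof -
  assume a: "hp \<le> (1-t)*gp + t*gx + (n0 - 2*t*I + t\<^sup>2*N)/2"
  have "t*(t*N - 2*dd) = 2*((1-t)*gp + t*gx + (n0 - 2*t*I + t\<^sup>2*N)/2 - hp)"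
    unfolding assms by (simp add: field_simps power2_eq_square)
  moreover have "0 \<le> (1-t)*gp + t*gx + (n0 - 2*t*I + t\<^sup>2*N)/2 - hp" using a by simp
  ultimately show ?thesis by (metis mult_nonneg_nonneg zero_le_numeral)
qed

lemma min_exists:
  fixes g :: "'h::{real_inner,complete_space} \<Rightarrow> real" and D :: "'h set"
  assumes p0: "p0 \<in> D"
    and conv: "\<And>a b t. a \<in> D \<Longrightarrow> b \<in> D \<Longrightarrow> 0 < t \<Longrightarrow> t < 1 \<Longrightarrow>
        (1 - t) *\<^sub>R a + t *\<^sub>R b \<in> D \<and> g ((1 - t) *\<^sub>R a + t *\<^sub>R b) \<le> (1 - t) * g a + t * g b"
    and cl: "\<And>c. closed {x \<in> D. g x \<le> c}"
    and lb: "\<And>x. x \<in> D \<Longrightarrow> m0 \<le> g x + (norm (y - x))\<^sup>2 / 2"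
  shows "\<exists>p\<in>D. \<forall>x\<in>D. g p + inner (x - p) (y - p) \<le> g x"
proof -
  define h where "h x = g x + (norm (y - x))\<^sup>2 / 2" for x
  define m where "m = Inf (h ` D)"
  have bdd: "bdd_below (h ` D)" using lb unfolding h_def by (auto intro!: bdd_belowI[of _ m0])
  have hm: "m \<le> h x" if "x \<in> D" for x
    unfolding m_def using bdd that by (auto intro: cInf_lower)
  have "\<exists>x\<in>D. h x < m + 1 / (real k + 1)" for k
  proof -
    have "Inf (h ` D) < m + 1 / (real k + 1)" unfolding m_def by simp
    then obtain v where "v \<in> h ` D" "v < m + 1 / (real k + 1)"
      using cInf_lessD[of "h ` D"] p0 by blast
    then show ?thesis by auto
  qed
  then obtain xs where xsD: "\<And>k. xs k \<in> D" and xsm: "\<And>k. h (xs k) < m + 1 / (real k + 1)"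
    by metis
  have mid: "(norm (a - b))\<^sup>2 \<le> 4 * (h a - m) + 4 * (h b - m)" if "a \<in> D" "b \<in> D" for a b
  proof -
    have c1: "(1 - 1/2) *\<^sub>R a + (1/2) *\<^sub>R b \<in> D \<and>
        g ((1 - 1/2) *\<^sub>R a + (1/2) *\<^sub>R b) \<le> (1 - 1/2) * g a + (1/2) * g b"
      using conv[OF that, of "1/2"] by simp
    have e: "(1 - 1/2::real) = 1/2" by simp
    have "m \<le> h ((1/2) *\<^sub>R a + (1/2) *\<^sub>R b)" using c1 hm by (simp add: e)
    also have "\<dots> \<le> (1/2) * g a + (1/2) * g b + ((norm (y - a))\<^sup>2 / 2 + (norm (y - b))\<^sup>2 / 2 - (norm (a - b))\<^sup>2 / 4) / 2"
      unfolding h_def norm_mid_identity using c1 by (simp add: e)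
    finally show ?thesis unfolding h_def by (simp add: field_simps)
  qed
  have "Cauchy xs"
    unfolding Cauchy_def
  proof (intro allI impI)
    fix e :: real assume "0 < e"
    obtain N :: nat where N: "8 / e\<^sup>2 < real N" using reals_Archimedean2 by blast
    show "\<exists>M. \<forall>j\<ge>M. \<forall>k\<ge>M. dist (xs j) (xs k) < e"
    proof (intro exI allI impI)
      fix j k assume jk: "N \<le> j" "N \<le> k"
      have "(norm (xs j - xs k))\<^sup>2 \<le> 4 * (h (xs j) - m) + 4 * (h (xs k) - m)"
        using mid xsD by blast
      also have "\<dots> < 4 / (real j + 1) + 4 / (real k + 1)"
        using xsm[of j] xsm[of k] by simp
      also have "\<dots> \<le> 4 / (real N + 1) + 4 / (real N + 1)"
        using jk by (intro add_mono divide_left_mono) auto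
      also have "\<dots> < e\<^sup>2"
      proof -
        have "8 < e\<^sup>2 * real N" using N \<open>0 < e\<close> by (simp add: field_simps)
        moreover have "0 < e\<^sup>2" using \<open>0 < e\<close> by simp
        ultimately have "8 < e\<^sup>2 * (real N + 1)" unfolding distrib_left by linarith
        then have "8 / (real N + 1) < e\<^sup>2" by (simp add: divide_less_eq)
        then show ?thesis by simp
      qed
      finally have "(norm (xs j - xs k))\<^sup>2 < e\<^sup>2" .
      then have "norm (xs j - xs k) < e"
        using \<open>0 < e\<close> by (simp add: power_less_imp_less_base)
      then show "dist (xs j) (xs k) < e" by (simp add: dist_norm)
    qed
  qed
  then obtain p where lim: "xs \<longlonglongrightarrow> p" using Cauchy_convergent_iff convergent_def by blast
  have key: "p \<in> D \<and> g p \<le> m + 2 * d - (norm (y - p))\<^sup>2 / 2" if "0 < d" for d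
  proof -
    let ?c = "m + 2 * d - (norm (y - p))\<^sup>2 / 2"
    have t1: "(\<lambda>k. (norm (y - xs k))\<^sup>2 / 2) \<longlonglongrightarrow> (norm (y - p))\<^sup>2 / 2"
      by (intro tendsto_intros lim) auto
    have ev1: "eventually (\<lambda>k. (norm (y - p))\<^sup>2 / 2 - d < (norm (y - xs k))\<^sup>2 / 2) sequentially"
      using order_tendstoD(1)[OF t1, of "(norm (y - p))\<^sup>2 / 2 - d"] that by simp
    have ev2: "eventually (\<lambda>k. 1 / (real k + 1) < d) sequentially"
    proof -
      have "(\<lambda>k. 1 / (real k + 1)) \<longlonglongrightarrow> 0" using LIMSEQ_inverse_real_of_nat by (simp add: inverse_eq_divide add.commute)
      then show ?thesis using order_tendstoD(2) that by blast
    qed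
    have "eventually (\<lambda>k. xs k \<in> {x \<in> D. g x \<le> ?c}) sequentially"
      using ev1 ev2
    proof eventually_elim
      case (elim k)
      then show ?case using xsm[of k] xsD[of k] unfolding h_def by auto
    qed
    then have "p \<in> {x \<in> D. g x \<le> ?c}"
      using Lim_in_closed_set[OF cl _ _ lim] by auto
    then show ?thesis by auto
  qed
  have pD: "p \<in> D" using key[of 1] by simp
  have hp: "h p \<le> m"
  proof (rule ccontr)
    assume "\<not> h p \<le> m"
    then have "0 < (h p - m) / 4" by simp
    from conjunct2[OF key[OF this]] \<open>\<not> h p \<le> m\<close> show False unfolding h_def by argo
  qed
  show ?thesis
  proof (intro bexI[OF _ pD] ballI)
    fix x assume xD: "x \<in> D"
    show "g p + inner (x - p) (y - p) \<le> g x"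
    proof (rule ccontr)
      assume neg: "\<not> ?thesis"
      define dd where "dd = g p + inner (x - p) (y - p) - g x"
      have dd: "0 < dd" using neg unfolding dd_def by simp
      define t where "t = min (1/2) (dd / ((norm (x - p))\<^sup>2 + 1))"
      have t0: "0 < t" and t1: "t < 1" using dd unfolding t_def by (auto intro!: divide_pos_pos add_nonneg_pos)
      have tle: "t \<le> dd / ((norm (x - p))\<^sup>2 + 1)" unfolding t_def by simp
      note cv = conv[OF pD xD t0 t1]
      have "h p \<le> h ((1 - t) *\<^sub>R p + t *\<^sub>R x)" using hp hm cv by force
      also have "\<dots> \<le> (1 - t) * g p + t * g x + ((norm (y - p))\<^sup>2 - 2 * t * inner (x - p) (y - p) + t\<^sup>2 * (norm (x - p))\<^sup>2) / 2"
        unfolding h_def norm_line_identity using cv by simp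
      finally have "0 \<le> t * (t * (norm (x - p))\<^sup>2 - 2 * dd)"
        by (rule aux_alg[OF h_def dd_def])
      then have A: "2 * dd \<le> t * (norm (x - p))\<^sup>2" using t0
        by (simp add: zero_le_mult_iff)
      have "t * (norm (x - p))\<^sup>2 \<le> dd / ((norm (x - p))\<^sup>2 + 1) * (norm (x - p))\<^sup>2"
        using tle by (intro mult_right_mono) auto
      also have "\<dots> \<le> dd"
        using dd by (simp add: field_simps add_pos_nonneg)
      finally show False using A dd by simp
    qed
  qed
qed




lemma subdiff_fin:
  assumes "proper_fun f" "u \<in> subdiff f x"
  shows "f x \<noteq> \<infinity>" "f x \<noteq> -\<infinity>"
proof -
  obtain x' where x': "f x' \<noteq> \<infinity>" using assms(1) unfolding proper_fun_def by blast
  have "f x + ereal (inner (x' - x) u) \<le> f x'" using assms(2) unfolding subdiff_def by blast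
  then show "f x \<noteq> \<infinity>" using x' by auto
  show "f x \<noteq> -\<infinity>" using assms(1) unfolding proper_fun_def by blast
qed

lemma subdiff_mono:
  assumes "proper_fun f" "u \<in> subdiff f x" "v \<in> subdiff f x'"
  shows "0 \<le> inner (x - x') (u - v)"
proof -
  obtain a where a: "f x = ereal a" using subdiff_fin[OF assms(1,2)] by (cases "f x") auto
  obtain b where b: "f x' = ereal b" using subdiff_fin[OF assms(1,3)] by (cases "f x'") auto
  have "f x + ereal (inner (x' - x) u) \<le> f x'" using assms(2) unfolding subdiff_def by blast
  then have 1: "a + inner (x' - x) u \<le> b" using a b by simp
  have "f x' + ereal (inner (x - x') v) \<le> f x" using assms(3) unfolding subdiff_def by blast
  then have 2: "b + inner (x - x') v \<le> a" using a b by simp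
  have "inner (x - x') (u - v) = - (inner (x' - x) u + inner (x - x') v)"
    by (simp add: inner_diff_left inner_diff_right algebra_simps inner_commute)
  then show ?thesis using 1 2 by linarith
qed

lemma prox_char:
  fixes f :: "'h::{real_inner,complete_space} \<Rightarrow> ereal"
  assumes G: "Gamma0 f" and u0: "u0 \<in> subdiff f z0" and gp: "0 < \<gamma>"
  shows "(1/\<gamma>) *\<^sub>R (y - prox (\<lambda>z. ereal \<gamma> * f z) y) \<in> subdiff f (prox (\<lambda>z. ereal \<gamma> * f z) y)"
proof -
  have pf: "proper_fun f" and cf: "ereal_convex f" and lf: "lsc f"
    using G unfolding Gamma0_def by auto
  define D where "D = {x. f x \<noteq> \<infinity>}"
  define r where "r x = real_of_ereal (f x)" for x
  define g where "g x = \<gamma> * r x" for x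
  have fin: "f x = ereal (r x)" if "x \<in> D" for x
    using that pf unfolding D_def r_def proper_fun_def by (cases "f x") auto
  have z0D: "z0 \<in> D" using subdiff_fin[OF pf u0] unfolding D_def by auto
  have conv: "(1 - t) *\<^sub>R a + t *\<^sub>R b \<in> D \<and> g ((1 - t) *\<^sub>R a + t *\<^sub>R b) \<le> (1 - t) * g a + t * g b"
    if "a \<in> D" "b \<in> D" "0 < t" "t < 1" for a b t
  proof -
    have "f ((1 - t) *\<^sub>R a + t *\<^sub>R b) \<le> ereal (1 - t) * f a + ereal t * f b"
      using cf that unfolding ereal_convex_def by blast
    also have "\<dots> = ereal ((1 - t) * r a + t * r b)" using fin that by simp
    finally have le: "f ((1 - t) *\<^sub>R a + t *\<^sub>R b) \<le> ereal ((1 - t) * r a + t * r b)" .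
    then have inD: "(1 - t) *\<^sub>R a + t *\<^sub>R b \<in> D" unfolding D_def by auto
    then have "r ((1 - t) *\<^sub>R a + t *\<^sub>R b) \<le> (1 - t) * r a + t * r b"
      using le fin by fastforce
    then have "\<gamma> * r ((1 - t) *\<^sub>R a + t *\<^sub>R b) \<le> \<gamma> * ((1 - t) * r a + t * r b)"
      using gp by (intro mult_left_mono) auto
    then show ?thesis using inD unfolding g_def by (simp add: algebra_simps)
  qed
  have cl: "closed {x \<in> D. g x \<le> c}" for c
  proof -
    have "{x \<in> D. g x \<le> c} = {x. f x \<le> ereal (c / \<gamma>)}"
    proof safe
      fix x assume "x \<in> D" "g x \<le> c"
      then show "f x \<le> ereal (c / \<gamma>)" using fin[of x] gp unfolding g_def
        by (simp add: pos_le_divide_eq mult.commute)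
    next
      fix x assume a: "f x \<le> ereal (c / \<gamma>)"
      then show "x \<in> D" unfolding D_def by auto
      then show "g x \<le> c" using fin[of x] a gp unfolding g_def
        by (simp add: pos_le_divide_eq mult.commute)
    qed
    then show ?thesis using lf unfolding lsc_def by simp
  qed
  define m0 where "m0 = \<gamma> * r z0 + \<gamma> * inner (y - z0) u0 - \<gamma>\<^sup>2 * (norm u0)\<^sup>2 / 2"
  have lb: "m0 \<le> g x + (norm (y - x))\<^sup>2 / 2" if "x \<in> D" for x
  proof -
    have "f z0 + ereal (inner (x - z0) u0) \<le> f x" using u0 unfolding subdiff_def by blast
    then have 1: "r z0 + inner (x - z0) u0 \<le> r x" using fin that z0D by fastforce
    have 2: "0 \<le> (norm ((x - y) + \<gamma> *\<^sub>R u0))\<^sup>2" by simp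
    have 3: "(norm ((x - y) + \<gamma> *\<^sub>R u0))\<^sup>2 = (norm (y - x))\<^sup>2 + 2 * \<gamma> * inner (x - y) u0 + \<gamma>\<^sup>2 * (norm u0)\<^sup>2"
      unfolding power2_norm_eq_inner
      by (simp add: inner_diff_left inner_diff_right inner_add_left inner_add_right inner_commute
          algebra_simps power2_eq_square)
    have 4: "inner (x - z0) u0 = inner (x - y) u0 + inner (y - z0) u0"
      by (simp add: inner_diff_left)
    have A: "\<gamma> * r z0 + \<gamma> * inner (x - z0) u0 \<le> \<gamma> * r x" using 1 gp
      by (metis distrib_left mult_le_cancel_left_pos)
    have B: "0 \<le> (norm (y - x))\<^sup>2 + 2 * (\<gamma> * inner (x - y) u0) + \<gamma>\<^sup>2 * (norm u0)\<^sup>2"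
      using 2 3 by simp
    have C: "\<gamma> * inner (x - z0) u0 = \<gamma> * inner (x - y) u0 + \<gamma> * inner (y - z0) u0"
      using 4 by (simp add: distrib_left)
    show ?thesis unfolding m0_def g_def using A B C by linarith
  qed
  obtain p where pD: "p \<in> D" and sub: "\<And>x. x \<in> D \<Longrightarrow> g p + inner (x - p) (y - p) \<le> g x"
    using min_exists[OF z0D conv cl lb] by blast
  have gap: "g p + (norm (y - p))\<^sup>2 / 2 + (norm (x - p))\<^sup>2 / 2 \<le> g x + (norm (y - x))\<^sup>2 / 2"
    if "x \<in> D" for x
    using sub[OF that] norm_gap_identity[of y x p] by argo
  have fg: "ereal \<gamma> * f x = ereal (g x)" if "x \<in> D" for x
    using fin[OF that] unfolding g_def by simp
  have finf: "ereal \<gamma> * f x = \<infinity>" if "x \<notin> D" for x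
    using that gp unfolding D_def by simp
  have proxp: "prox (\<lambda>z. ereal \<gamma> * f z) y = p"
    unfolding prox_def
  proof (rule the_equality)
    show "\<forall>y'. ereal \<gamma> * f p + ereal ((norm (y - p))\<^sup>2 / 2) \<le> ereal \<gamma> * f y' + ereal ((norm (y - y'))\<^sup>2 / 2)"
    proof
      fix y'
      show "ereal \<gamma> * f p + ereal ((norm (y - p))\<^sup>2 / 2) \<le> ereal \<gamma> * f y' + ereal ((norm (y - y'))\<^sup>2 / 2)"
      proof (cases "y' \<in> D")
        case True
        have "g p + (norm (y - p))\<^sup>2 / 2 \<le> g y' + (norm (y - y'))\<^sup>2 / 2"
          using gap[OF True] zero_le_power2[of "norm (y' - p)"] by linarith
        then show ?thesis using fg[OF True] fg[OF pD] by simp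
      next
        case False
        have fy: "f y' = \<infinity>" using False unfolding D_def by simp
        show ?thesis using gp by (simp add: fy)
      qed
    qed
  next
    fix q assume q: "\<forall>y'. ereal \<gamma> * f q + ereal ((norm (y - q))\<^sup>2 / 2) \<le> ereal \<gamma> * f y' + ereal ((norm (y - y'))\<^sup>2 / 2)"
    then have qp: "ereal \<gamma> * f q + ereal ((norm (y - q))\<^sup>2 / 2) \<le> ereal (g p) + ereal ((norm (y - p))\<^sup>2 / 2)"
      using fg[OF pD] by metis
    have qD: "q \<in> D"
    proof (rule ccontr)
      assume "q \<notin> D"
      then have fq: "f q = \<infinity>" unfolding D_def by simp
      show False using qp gp by (simp add: fq)
    qed
    have "g q + (norm (y - q))\<^sup>2 / 2 \<le> g p + (norm (y - p))\<^sup>2 / 2"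
      using qp fg[OF qD] by simp
    then have "(norm (q - p))\<^sup>2 \<le> 0" using gap[OF qD] by linarith
    then show "q = p" by simp
  qed
  show ?thesis unfolding proxp subdiff_def
  proof safe
    fix x
    show "f p + ereal (inner (x - p) ((1 / \<gamma>) *\<^sub>R (y - p))) \<le> f x"
    proof (cases "x \<in> D")
      case True
      have "g p + inner (x - p) (y - p) \<le> g x" using sub[OF True] .
      then have "\<gamma> * (r p + inner (x - p) ((1 / \<gamma>) *\<^sub>R (y - p))) \<le> \<gamma> * r x"
        using gp unfolding g_def by (simp add: algebra_simps)
      then have "r p + inner (x - p) ((1 / \<gamma>) *\<^sub>R (y - p)) \<le> r x"
        using gp by simp
      then show ?thesis using fin[OF True] fin[OF pD] by simp
    next
      case False
      then show ?thesis unfolding D_def by simp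
    qed
  qed
qed




lemma tangent_line:
  fixes L :: "'h::real_inner \<Rightarrow> real"
  assumes conv: "convex_on UNIV (\<lambda>t::real. L (z + t *\<^sub>R d))"
    and der: "(L has_derivative (\<lambda>h. inner h D)) (at z)"
  shows "inner d D \<le> L (z + d) - L z"
proof -
  have d1: "((\<lambda>t::real. z + t *\<^sub>R d) has_derivative (\<lambda>t. t *\<^sub>R d)) (at 0)"
    by (auto intro!: derivative_eq_intros)
  have der': "(L has_derivative (\<lambda>h. inner h D)) (at ((\<lambda>t::real. z + t *\<^sub>R d) 0))"
    using der by simp
  have "((\<lambda>t. L (z + t *\<^sub>R d)) has_derivative (\<lambda>t. inner (t *\<^sub>R d) D)) (at 0)"
    using has_derivative_compose[OF d1 der'] by simp
  moreover have "(\<lambda>t. inner (t *\<^sub>R d) D) = (*) (inner d D)" by (auto simp: fun_eq_iff)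
  ultimately have "((\<lambda>t. L (z + t *\<^sub>R d)) has_field_derivative (inner d D)) (at 0 within UNIV)"
    unfolding has_field_derivative_def by simp
  from convex_on_imp_above_tangent[OF conv _ _ _ this, of 1]
  show ?thesis by simp
qed

lemma convex_line1:
  fixes L :: "'a::real_inner \<times> 'b::real_inner \<Rightarrow> real"
  assumes "convex_on UNIV (\<lambda>u1. L (u1, z2))"
  shows "convex_on UNIV (\<lambda>t::real. L ((z1, z2) + t *\<^sub>R (d, 0)))"
proof (rule convex_onI)
  fix t x y :: real assume t: "0 < t" "t < 1"
  have e: "(z1, z2) + ((1 - t) *\<^sub>R x + t *\<^sub>R y) *\<^sub>R (d, 0)
      = ((1 - t) *\<^sub>R (z1 + x *\<^sub>R d) + t *\<^sub>R (z1 + y *\<^sub>R d), z2)"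
    by (simp add: algebra_simps)
  show "L ((z1, z2) + ((1 - t) *\<^sub>R x + t *\<^sub>R y) *\<^sub>R (d, 0))
    \<le> (1 - t) * L ((z1, z2) + x *\<^sub>R (d, 0)) + t * L ((z1, z2) + y *\<^sub>R (d, 0))"
    unfolding e using convex_onD[OF assms, of t "z1 + x *\<^sub>R d" "z1 + y *\<^sub>R d"] t by simp
qed auto

lemma convex_line2:
  fixes L :: "'a::real_inner \<times> 'b::real_inner \<Rightarrow> real"
  assumes "convex_on UNIV (\<lambda>u2. L (z1, u2))"
  shows "convex_on UNIV (\<lambda>t::real. L ((z1, z2) + t *\<^sub>R (0, d)))"
proof (rule convex_onI)
  fix t x y :: real assume t: "0 < t" "t < 1"
  have e: "(z1, z2) + ((1 - t) *\<^sub>R x + t *\<^sub>R y) *\<^sub>R (0, d)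
      = (z1, (1 - t) *\<^sub>R (z2 + x *\<^sub>R d) + t *\<^sub>R (z2 + y *\<^sub>R d))"
    by (simp add: algebra_simps)
  show "L ((z1, z2) + ((1 - t) *\<^sub>R x + t *\<^sub>R y) *\<^sub>R (0, d))
    \<le> (1 - t) * L ((z1, z2) + x *\<^sub>R (0, d)) + t * L ((z1, z2) + y *\<^sub>R (0, d))"
    unfolding e using convex_onD[OF assms, of t "z2 + x *\<^sub>R d" "z2 + y *\<^sub>R d"] t by simp
qed auto

locale LG =
  fixes L :: "'a::real_inner \<times> 'b::real_inner \<Rightarrow> real" and G :: "'a \<times> 'b \<Rightarrow> 'a \<times> 'b"
  assumes L_grad: "\<And>z. GDERIV L z :> G z"
    and L_concave: "\<And>u1. concave_on UNIV (\<lambda>u2. L (u1, u2))"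
    and L_convex: "\<And>u2. convex_on UNIV (\<lambda>u1. L (u1, u2))"
begin

lemma T1: "inner d (fst (G (z1, z2))) \<le> L (z1 + d, z2) - L (z1, z2)"
proof -
  have "inner (d, 0) (G (z1, z2)) \<le> L ((z1, z2) + (d, 0)) - L (z1, z2)"
    by (rule tangent_line[OF convex_line1[OF L_convex]]) (use L_grad[of "(z1, z2)"] in \<open>simp add: gderiv_def\<close>)
  then show ?thesis by (cases "G (z1, z2)") simp
qed

lemma T2: "- inner d (snd (G (z1, z2))) \<le> L (z1, z2) - L (z1, z2 + d)"
proof -
  have c: "convex_on UNIV (\<lambda>u2. - L (z1, u2))" using L_concave[of z1] unfolding concave_on_def .
  have der: "((\<lambda>x. - L x) has_derivative (\<lambda>h. inner h (- G (z1, z2)))) (at (z1, z2))"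
    using has_derivative_minus[of L _ "at (z1, z2)"] L_grad[of "(z1, z2)"] unfolding gderiv_def by simp
  have "inner (0, d) (- G (z1, z2)) \<le> - L ((z1, z2) + (0, d)) - (- L (z1, z2))"
    using tangent_line[OF convex_line2[OF c] der] by simp
  then show ?thesis by (cases "G (z1, z2)") simp
qed

definition B :: "'a \<times> 'b \<Rightarrow> 'a \<times> 'b" where "B z = (fst (G z), - snd (G z))"

lemma B_mono: "0 \<le> inner (w - z) (B w - B z)"
proof -
  obtain w1 w2 where w: "w = (w1, w2)" by fastforce
  obtain z1 z2 where z: "z = (z1, z2)" by fastforce
  have 1: "inner (w1 - z1) (fst (G (z1, z2))) \<le> L (w1, z2) - L (z1, z2)"
    using T1[of "w1 - z1" z1 z2] by simp
  have 2: "inner (z1 - w1) (fst (G (w1, w2))) \<le> L (z1, w2) - L (w1, w2)"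
    using T1[of "z1 - w1" w1 w2] by simp
  have 3: "- inner (w2 - z2) (snd (G (z1, z2))) \<le> L (z1, z2) - L (z1, w2)"
    using T2[of "w2 - z2" z1 z2] by simp
  have 4: "- inner (z2 - w2) (snd (G (w1, w2))) \<le> L (w1, w2) - L (w1, z2)"
    using T2[of "z2 - w2" w1 w2] by simp
  have e: "inner (w - z) (B w - B z) = inner (w1 - z1) (fst (G (w1, w2))) - inner (w1 - z1) (fst (G (z1, z2)))
       - inner (w2 - z2) (snd (G (w1, w2))) + inner (w2 - z2) (snd (G (z1, z2)))"
    unfolding w z B_def by (simp add: inner_diff_right algebra_simps)
  have e2: "inner (z1 - w1) (fst (G (w1, w2))) = - inner (w1 - z1) (fst (G (w1, w2)))"
    by (metis inner_minus_left minus_diff_eq)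
  have e3: "inner (z2 - w2) (snd (G (w1, w2))) = - inner (w2 - z2) (snd (G (w1, w2)))"
    by (metis inner_minus_left minus_diff_eq)
  show ?thesis using 1 2 3 4 e e2 e3 by linarith
qed

lemma argmin_from_sol:
  assumes pf: "proper_fun f" and sol: "(- fst (G (w1, w2)), snd (G (w1, w2))) \<in> subdiff f (w1, w2)"
  shows "w1 \<in> Argmin (\<lambda>x. f (x, w2) + ereal (L (x, w2)))"
    and "w2 \<in> Argmin (\<lambda>x. f (w1, x) - ereal (L (w1, x)))"
proof -
  obtain a where a: "f (w1, w2) = ereal a"
    using subdiff_fin[OF pf sol] by (cases "f (w1, w2)") auto
  have sub: "f (w1, w2) + ereal (inner (y - (w1, w2)) (- fst (G (w1, w2)), snd (G (w1, w2)))) \<le> f y" for y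
    using sol unfolding subdiff_def by blast
  show "w1 \<in> Argmin (\<lambda>x. f (x, w2) + ereal (L (x, w2)))"
    unfolding Argmin_def
  proof safe
    fix x
    let ?c = "inner (x - w1) (fst (G (w1, w2)))"
    have "f (w1, w2) + ereal (- ?c) \<le> f (x, w2)" using sub[of "(x, w2)"] by simp
    then have A: "ereal (a - ?c) \<le> f (x, w2)" using a by simp
    have B: "L (w1, w2) + ?c \<le> L (x, w2)" using T1[of "x - w1" w1 w2] by simp
    have "f (w1, w2) + ereal (L (w1, w2)) = ereal (a - ?c) + ereal (L (w1, w2) + ?c)"
      using a by simp
    also have "\<dots> \<le> f (x, w2) + ereal (L (x, w2))"
      using A B by (intro add_mono) auto
    finally show "f (w1, w2) + ereal (L (w1, w2)) \<le> f (x, w2) + ereal (L (x, w2))" .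
  qed
  show "w2 \<in> Argmin (\<lambda>x. f (w1, x) - ereal (L (w1, x)))"
    unfolding Argmin_def
  proof safe
    fix x
    let ?c = "inner (x - w2) (snd (G (w1, w2)))"
    have "f (w1, w2) + ereal ?c \<le> f (w1, x)" using sub[of "(w1, x)"] by simp
    then have A: "ereal (a + ?c) \<le> f (w1, x)" using a by simp
    have B: "- L (w1, w2) - ?c \<le> - L (w1, x)" using T2[of "x - w2" w1 w2] by simp
    show "f (w1, w2) - ereal (L (w1, w2)) \<le> f (w1, x) - ereal (L (w1, x))"
    proof (cases "f (w1, x)")
      case (real r)
      then show ?thesis using A B a by simp
    next
      case PInf
      then show ?thesis using a by simp
    next
      case MInf
      then show ?thesis using A by simp
    qed
  qed
qed

end




lemma subspace_closure_my:
  fixes S :: "'h::real_normed_vector set"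
  assumes S: "subspace S"
  shows "subspace (closure S)"
  unfolding subspace_def
proof (intro conjI ballI allI)
  show "0 \<in> closure S" using S closure_subset subspace_0 by blast
next
  fix a b assume a: "a \<in> closure S" and b: "b \<in> closure S"
  show "a + b \<in> closure S"
    unfolding closure_approachable
  proof (intro allI impI)
    fix e :: real assume e: "0 < e"
    obtain a' where a': "a' \<in> S" "dist a' a < e/2" using a e unfolding closure_approachable
      by (meson half_gt_zero)
    obtain b' where b': "b' \<in> S" "dist b' b < e/2" using b e unfolding closure_approachable
      by (meson half_gt_zero)
    have "a' + b' \<in> S" using S a' b' by (simp add: subspace_add)
    moreover have "dist (a' + b') (a + b) < e"
    proof -
      have "dist (a' + b') (a + b) \<le> dist a' a + dist b' b"
        by (simp add: dist_norm norm_triangle_ineq[of "a' - a" "b' - b", simplified algebra_simps] algebra_simps)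
      then show ?thesis using a' b' by linarith
    qed
    ultimately show "\<exists>y\<in>S. dist y (a + b) < e" by blast
  qed
next
  fix c :: real and a assume a: "a \<in> closure S"
  show "c *\<^sub>R a \<in> closure S"
  proof (cases "c = 0")
    case True
    then show ?thesis using S closure_subset subspace_0 by auto
  next
    case False
    show ?thesis unfolding closure_approachable
    proof (intro allI impI)
      fix e :: real assume e: "0 < e"
      then have "0 < e / \<bar>c\<bar>" using False by simp
      then obtain a' where a': "a' \<in> S" "dist a' a < e / \<bar>c\<bar>" using a unfolding closure_approachable
        by blast
      have "c *\<^sub>R a' \<in> S" using S a' by (simp add: subspace_scale)
      moreover have "dist (c *\<^sub>R a') (c *\<^sub>R a) < e"
      proof -
        have "dist (c *\<^sub>R a') (c *\<^sub>R a) = \<bar>c\<bar> * dist a' a"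
          by (simp add: dist_norm flip: scaleR_diff_right)
        also have "\<dots> < \<bar>c\<bar> * (e / \<bar>c\<bar>)" using a' False by (intro mult_strict_left_mono) auto
        also have "\<dots> = e" using False by simp
        finally show ?thesis .
      qed
      ultimately show "\<exists>y\<in>S. dist y (c *\<^sub>R a) < e" by blast
    qed
  qed
qed

lemma projection_exists:
  fixes M :: "'h::{real_inner,complete_space} set"
  assumes sub: "subspace M" and cl: "closed M"
  shows "\<exists>p\<in>M. \<forall>m\<in>M. inner m (y - p) = 0"
proof -
  have conv: "(1 - t) *\<^sub>R a + t *\<^sub>R b \<in> M \<and> (\<lambda>_. 0::real) ((1 - t) *\<^sub>R a + t *\<^sub>R b) \<le> (1 - t) * (\<lambda>_. 0) a + t * (\<lambda>_. 0) b"
    if "a \<in> M" "b \<in> M" "0 < t" "t < 1" for a b t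
    using that sub by (simp add: subspace_add subspace_scale)
  have clo: "closed {x \<in> M. (\<lambda>_. 0::real) x \<le> c}" for c
    using cl by (cases "0 \<le> c") auto
  obtain p where pM: "p \<in> M" and sp: "\<And>x. x \<in> M \<Longrightarrow> 0 + inner (x - p) (y - p) \<le> 0"
    using min_exists[of 0 M "\<lambda>_. 0", OF subspace_0[OF sub] conv clo, of 0 y] by auto
  show ?thesis
  proof (intro bexI[OF _ pM] ballI)
    fix m assume m: "m \<in> M"
    have "p + m \<in> M" using sub pM m by (simp add: subspace_add)
    then have 1: "inner m (y - p) \<le> 0" using sp[of "p + m"] by simp
    have "p + (-1) *\<^sub>R m \<in> M" using sub pM m by (metis subspace_add subspace_scale)
    then have 2: "- inner m (y - p) \<le> 0" using sp[of "p + (-1) *\<^sub>R m"] by simp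
    show "inner m (y - p) = 0" using 1 2 by simp
  qed
qed

lemma riesz_my:
  fixes \<psi> :: "'h::{real_inner,complete_space} \<Rightarrow> real"
  assumes add: "\<And>a b. \<psi> (a + b) = \<psi> a + \<psi> b" and scale: "\<And>c a. \<psi> (c *\<^sub>R a) = c * \<psi> a"
    and bnd: "\<And>a. \<bar>\<psi> a\<bar> \<le> R * norm a"
  shows "\<exists>w. \<forall>h. \<psi> h = inner h w"
proof -
  have bl: "bounded_linear \<psi>"
  proof (rule bounded_linear_intro[where K = "\<bar>R\<bar>"])
    fix x :: 'h
    have "R * norm x \<le> \<bar>R\<bar> * norm x" by (intro mult_right_mono) auto
    then show "norm (\<psi> x) \<le> norm x * \<bar>R\<bar>" using bnd[of x] by (simp add: mult.commute)
  qed (use add scale in auto)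
  have conv: "(1 - t) *\<^sub>R a + t *\<^sub>R b \<in> UNIV \<and> (\<lambda>v. - \<psi> v) ((1 - t) *\<^sub>R a + t *\<^sub>R b) \<le> (1 - t) * (\<lambda>v. - \<psi> v) a + t * (\<lambda>v. - \<psi> v) b"
    for a b t using add scale by simp
  have clo: "closed {x \<in> UNIV. (\<lambda>v. - \<psi> v) x \<le> c}" for c
  proof -
    have "continuous_on UNIV (\<lambda>v. - \<psi> v)" using linear_continuous_on[OF bl] by (intro continuous_intros)
    then show ?thesis by (simp add: closed_Collect_le)
  qed
  have lb: "- (R\<^sup>2 / 2) \<le> (\<lambda>v. - \<psi> v) x + (norm (0 - x))\<^sup>2 / 2" for x
  proof -
    have "\<psi> x \<le> R * norm x" using bnd[of x] by linarith
    moreover have "0 \<le> (norm x - R)\<^sup>2" by simp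
    ultimately show ?thesis by (simp add: power2_diff algebra_simps)
  qed
  obtain w where sw: "\<And>v. - \<psi> w + inner (v - w) (0 - w) \<le> - \<psi> v"
    using min_exists[of 0 UNIV "\<lambda>v. - \<psi> v", OF _ conv clo lb] by auto
  have diff: "\<psi> (v - w) = \<psi> v - \<psi> w" for v
    using add[of "v - w" w] by simp
  show ?thesis
  proof (intro exI allI)
    fix h
    have 1: "\<psi> h \<le> inner h w" using sw[of "w + h"] add[of w h] by (simp add: inner_minus_right)
    have "\<psi> ((-1) *\<^sub>R h) \<le> inner ((-1) *\<^sub>R h) w" using sw[of "w + (-1) *\<^sub>R h"] add[of w "(-1) *\<^sub>R h"]
      by (simp add: inner_minus_right)
    then have 2: "- \<psi> h \<le> - inner h w" using scale[of "-1" h] by simp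
    show "\<psi> h = inner h w" using 1 2 by linarith
  qed
qed




lemma weak_compact:
  fixes x :: "nat \<Rightarrow> 'h::{real_inner,complete_space}"
  assumes bnd: "\<And>n. norm (x n) \<le> R"
  shows "\<exists>r w. strict_mono r \<and> weak_conv (x \<circ> r) w"
proof -
  define P where "P m s \<longleftrightarrow> convergent (\<lambda>n. inner (x (s n)) (x m))" for m and s :: "nat \<Rightarrow> nat"
  have R0: "0 \<le> R" using bnd[of 0] norm_ge_zero order_trans by blast
  have ib: "\<bar>inner (x k) v\<bar> \<le> R * norm v" for k v
    using Cauchy_Schwarz_ineq2[of "x k" v] bnd[of k] by (meson mult_right_mono norm_ge_zero order_trans)
  interpret subseqs P
  proof
    fix m and s :: "nat \<Rightarrow> nat" assume "strict_mono s"
    have "bounded (range (\<lambda>n. inner (x (s n)) (x m)))"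
      unfolding bounded_iff using ib by (auto intro!: exI[of _ "R * norm (x m)"])
    then obtain l r where "strict_mono r" "((\<lambda>n. inner (x (s n)) (x m)) \<circ> r) \<longlonglongrightarrow> l"
      using bounded_imp_convergent_subsequence by blast
    then show "\<exists>r'. strict_mono r' \<and> P m (s \<circ> r')" unfolding P_def convergent_def o_def by auto
  qed
  obtain ds where ds: "ds = diagseq" by simp
  have Pd: "P m ds" for m
  proof -
    have "P m (ds \<circ> (+) (Suc m))"
      unfolding ds
    proof (rule diagseq_holds)
      fix r s n assume r: "strict_mono (r :: nat \<Rightarrow> nat)" and "P n s"
      then obtain l where "(\<lambda>k. inner (x (s k)) (x n)) \<longlonglongrightarrow> l" unfolding P_def convergent_def by auto
      from LIMSEQ_subseq_LIMSEQ[OF this r] show "P n (s \<circ> r)" unfolding P_def convergent_def o_def by auto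
    qed
    then show ?thesis unfolding P_def o_def
      using convergent_ignore_initial_segment[of "\<lambda>n. inner (x (ds n)) (x m)" "Suc m"]
      by (simp add: add.commute)
  qed
  define r where "r = ds"
  define xs where "xs = x \<circ> r"
  define C where "C = {v. convergent (\<lambda>n. inner (xs n) v)}"
  have c0: "0 \<in> C" unfolding C_def by (simp add: convergent_const)
  have cadd: "a + b \<in> C" if "a \<in> C" "b \<in> C" for a b
    using that unfolding C_def by (simp add: inner_add_right convergent_add)
  have cscale: "c *\<^sub>R a \<in> C" if aC: "a \<in> C" for c a
  proof -
    obtain l where "(\<lambda>n. inner (xs n) a) \<longlonglongrightarrow> l" using aC unfolding C_def convergent_def by auto
    then have "(\<lambda>n. c * inner (xs n) a) \<longlonglongrightarrow> c * l" by (intro tendsto_intros)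
    then show ?thesis unfolding C_def convergent_def by auto
  qed
  have subC: "subspace C" unfolding subspace_def using c0 cadd cscale by blast
  have "range x \<subseteq> C" using Pd unfolding C_def P_def xs_def r_def o_def by auto
  then have spanC: "span (range x) \<subseteq> C" by (rule span_minimal[OF _ subC])
  define M where "M = closure (span (range x))"
  have Msub: "subspace M" unfolding M_def by (rule subspace_closure_my[OF subspace_span])
  have xsM: "xs n \<in> M" for n
    unfolding M_def xs_def using closure_subset span_superset by fastforce
  have bxs: "\<bar>inner (xs n) v\<bar> \<le> R * norm v" for n v unfolding xs_def using ib by simp
  have MC: "v \<in> C" if vM: "v \<in> M" for v
    unfolding C_def mem_Collect_eq Cauchy_convergent_iff[symmetric] Cauchy_def
  proof (intro allI impI)
    fix e :: real assume e: "0 < e"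
    define d where "d = e / (3 * (R + 1))"
    have d: "0 < d" using e R0 unfolding d_def by simp
    have Rd: "R * d \<le> e / 3"
    proof -
      have "R * d \<le> (R + 1) * d" using d by simp
      also have "\<dots> = e / 3" unfolding d_def using R0 by (simp add: field_simps)
      finally show ?thesis .
    qed
    obtain v' where v': "v' \<in> span (range x)" "dist v' v < d"
      using vM d unfolding M_def closure_approachable by blast
    have "convergent (\<lambda>n. inner (xs n) v')" using spanC v'(1) unfolding C_def by auto
    then have "Cauchy (\<lambda>n. inner (xs n) v')" by (simp add: Cauchy_convergent_iff)
    then obtain N where N: "\<And>m n. N \<le> m \<Longrightarrow> N \<le> n \<Longrightarrow> dist (inner (xs m) v') (inner (xs n) v') < e / 3"
      unfolding Cauchy_def using e by (meson divide_pos_pos zero_less_numeral)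
    show "\<exists>N. \<forall>m\<ge>N. \<forall>n\<ge>N. dist (inner (xs m) v) (inner (xs n) v) < e"
    proof (intro exI allI impI)
      fix m n assume mn: "N \<le> m" "N \<le> n"
      have nv: "norm (v - v') < d" using v'(2) by (simp add: dist_norm norm_minus_commute)
      have 1: "\<bar>inner (xs m) (v - v')\<bar> \<le> e / 3"
        using bxs[of m "v - v'"] nv Rd R0 by (meson less_imp_le mult_left_mono order_trans)
      have 2: "\<bar>inner (xs n) (v - v')\<bar> \<le> e / 3"
        using bxs[of n "v - v'"] nv Rd R0 by (meson less_imp_le mult_left_mono order_trans)
      have 3: "\<bar>inner (xs m) v' - inner (xs n) v'\<bar> < e / 3" using N[OF mn] by (simp add: dist_real_def)
      have "inner (xs m) v - inner (xs n) v = inner (xs m) (v - v') - inner (xs n) (v - v') + (inner (xs m) v' - inner (xs n) v')"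
        by (simp add: inner_diff_right)
      then show "dist (inner (xs m) v) (inner (xs n) v) < e"
        using 1 2 3 unfolding dist_real_def by linarith
    qed
  qed
  have clM: "closed M" unfolding M_def by simp
  have conv_all: "convergent (\<lambda>n. inner (xs n) y)" for y
  proof -
    obtain p where pM: "p \<in> M" and orth: "\<And>m. m \<in> M \<Longrightarrow> inner m (y - p) = 0"
      using projection_exists[OF Msub clM, of y] by blast
    have "inner (xs n) y = inner (xs n) p" for n
      using orth[OF xsM[of n]] by (simp add: inner_diff_right)
    then show ?thesis using MC[OF pM] unfolding C_def by simp
  qed
  define \<psi> where "\<psi> y = lim (\<lambda>n. inner (xs n) y)" for y
  have lim: "(\<lambda>n. inner (xs n) y) \<longlonglongrightarrow> \<psi> y" for y
    unfolding \<psi>_def using conv_all convergent_LIMSEQ_iff by blast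
  have add: "\<psi> (a + b) = \<psi> a + \<psi> b" for a b
  proof -
    have "(\<lambda>n. inner (xs n) (a + b)) \<longlonglongrightarrow> \<psi> a + \<psi> b"
      unfolding inner_add_right by (intro tendsto_add lim)
    then show ?thesis using lim LIMSEQ_unique by blast
  qed
  have scale: "\<psi> (c *\<^sub>R a) = c * \<psi> a" for c a
  proof -
    have "(\<lambda>n. inner (xs n) (c *\<^sub>R a)) \<longlonglongrightarrow> c * \<psi> a"
      unfolding inner_scaleR_right by (intro tendsto_mult_left lim)
    then show ?thesis using lim LIMSEQ_unique by blast
  qed
  have bnd\<psi>: "\<bar>\<psi> a\<bar> \<le> R * norm a" for a
  proof -
    have "(\<lambda>n. \<bar>inner (xs n) a\<bar>) \<longlonglongrightarrow> \<bar>\<psi> a\<bar>" by (intro tendsto_rabs lim)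
    then show ?thesis using bxs LIMSEQ_le_const2 by blast
  qed
  obtain w where w: "\<And>h. \<psi> h = inner h w" using riesz_my[OF add scale bnd\<psi>] by blast
  have "weak_conv xs w"
    unfolding weak_conv_def using lim w by (simp add: inner_commute)
  moreover have "strict_mono r" unfolding r_def ds by (rule subseq_diagseq)
  ultimately show ?thesis unfolding xs_def by blast
qed




lemma quasi_fejer:
  fixes a e :: "nat \<Rightarrow> real"
  assumes a0: "\<And>n. 0 \<le> a n" and step: "\<And>n. a (Suc n) \<le> a n + e n"
    and e0: "\<And>n. 0 \<le> e n" and se: "summable e"
  shows "convergent a"
proof -
  define b where "b n = a n - (\<Sum>i<n. e i)" for n
  have "decseq b"
    unfolding decseq_Suc_iff
  proof
    fix n
    have "a (Suc n) \<le> a n + e n" by (rule step)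
    then show "b (Suc n) \<le> b n" unfolding b_def by simp
  qed
  moreover have "\<forall>i. - suminf e \<le> b i"
  proof
    fix i
    have "(\<Sum>k<i. e k) \<le> suminf e" using sum_le_suminf[OF se, of "{..<i}"] e0 by auto
    then show "- suminf e \<le> b i" using a0[of i] unfolding b_def by linarith
  qed
  ultimately obtain L where L: "b \<longlonglongrightarrow> L" using decseq_convergent by blast
  have "(\<lambda>n. b n + (\<Sum>i<n. e i)) \<longlonglongrightarrow> L + suminf e"
    by (intro tendsto_add L summable_LIMSEQ se)
  then show ?thesis unfolding b_def convergent_def by auto
qed

lemma tseng_identity:
  fixes a d e :: "'h::real_inner"
  shows "(norm (a + e))\<^sup>2 = (norm (d + a))\<^sup>2 - (norm d)\<^sup>2 + (norm e)\<^sup>2 + 2 * inner a (e - d)"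
  unfolding power2_norm_eq_inner
  by (simp add: inner_add_left inner_add_right inner_diff_right inner_commute algebra_simps)

lemma tseng_step:
  fixes B :: "'h::real_inner \<Rightarrow> 'h"
  assumes pf: "proper_fun f"
    and Bmono: "\<And>u v. 0 \<le> inner (u - v) (B u - B v)"
    and Blip: "\<And>u v. norm (B u - B v) \<le> \<kappa> * norm (u - v)"
    and k0: "0 \<le> \<kappa>" and g0: "0 < \<gamma>"
    and pv: "(1/\<gamma>) *\<^sub>R ((x - \<gamma> *\<^sub>R B x) - p) \<in> subdiff f p"
    and ws: "- B w \<in> subdiff f w"
  shows "(norm (p + \<gamma> *\<^sub>R (B x - B p) - w))\<^sup>2 \<le> (norm (x - w))\<^sup>2 - (1 - (\<gamma> * \<kappa>)\<^sup>2) * (norm (x - p))\<^sup>2"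
proof -
  define v where "v = (1/\<gamma>) *\<^sub>R ((x - \<gamma> *\<^sub>R B x) - p)"
  define a where "a = p - w"
  define d where "d = x - p"
  define e where "e = \<gamma> *\<^sub>R (B x - B p)"
  have m1: "0 \<le> inner (p - w) (v - (- B w))" using subdiff_mono[OF pf pv[folded v_def] ws] .
  have m2: "0 \<le> inner (p - w) (B p - B w)" using Bmono .
  have "inner (p - w) (v - (- B w)) + inner (p - w) (B p - B w) = inner (p - w) (v + B p)"
    by (simp add: inner_add_right inner_diff_right algebra_simps)
  then have m3: "0 \<le> inner (p - w) (v + B p)" using m1 m2 by linarith
  have "\<gamma> *\<^sub>R (v + B p) = d - e"
    unfolding v_def d_def e_def using g0 by (simp add: algebra_simps)
  then have "inner a (d - e) = \<gamma> * inner (p - w) (v + B p)"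
    unfolding a_def by (metis inner_scaleR_right)
  then have m4: "inner a (e - d) \<le> 0" using m3 g0
    by (metis inner_diff_right inner_minus_right minus_diff_eq neg_le_0_iff_le zero_le_mult_iff less_imp_le)
  have ne: "norm e \<le> \<gamma> * \<kappa> * norm d"
    unfolding e_def d_def using Blip[of x p] g0 by (simp add: mult.assoc mult_left_mono)
  then have ne2: "(norm e)\<^sup>2 \<le> (\<gamma> * \<kappa>)\<^sup>2 * (norm d)\<^sup>2"
    by (metis norm_ge_zero power_mono power_mult_distrib)
  have "p + \<gamma> *\<^sub>R (B x - B p) - w = a + e" unfolding a_def e_def by simp
  moreover have "x - w = d + a" unfolding a_def d_def by simp
  ultimately show ?thesis using tseng_identity[of a e d] m4 ne2 unfolding d_def[symmetric]
    by (simp add: algebra_simps)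
qed




lemma weak_conv_subseq:
  assumes "weak_conv X w" "strict_mono r" shows "weak_conv (X \<circ> r) w"
  using assms unfolding weak_conv_def o_def using LIMSEQ_subseq_LIMSEQ[unfolded o_def] by blast

lemma cluster_unique:
  fixes Z :: "nat \<Rightarrow> 'h::real_inner"
  assumes c0: "convergent (\<lambda>n. norm (Z n - w0))" and c1: "convergent (\<lambda>n. norm (Z n - w1))"
    and r0: "strict_mono r0" "weak_conv (Z \<circ> r0) w0"
    and r1: "strict_mono r1" "weak_conv (Z \<circ> r1) w1"
  shows "w0 = w1"
proof -
  define c where "c n = inner (Z n) (w0 - w1)" for n
  have id: "c n = ((norm (Z n - w1))\<^sup>2 - (norm (Z n - w0))\<^sup>2 - (norm w1)\<^sup>2 + (norm w0)\<^sup>2) / 2" for n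
    unfolding c_def power2_norm_eq_inner
    by (simp add: inner_diff_left inner_diff_right inner_commute algebra_simps)
  obtain l0 where l0: "(\<lambda>n. norm (Z n - w0)) \<longlonglongrightarrow> l0" using c0 unfolding convergent_def by auto
  obtain l1 where l1: "(\<lambda>n. norm (Z n - w1)) \<longlonglongrightarrow> l1" using c1 unfolding convergent_def by auto
  have "c \<longlonglongrightarrow> (l1\<^sup>2 - l0\<^sup>2 - (norm w1)\<^sup>2 + (norm w0)\<^sup>2) / 2"
    unfolding id by (intro tendsto_intros l0 l1) auto
  then obtain L where L: "c \<longlonglongrightarrow> L" by blast
  have A: "(c \<circ> r0) \<longlonglongrightarrow> inner w0 (w0 - w1)"
    using r0(2) unfolding weak_conv_def c_def o_def by blast
  have "(c \<circ> r0) \<longlonglongrightarrow> L" by (rule LIMSEQ_subseq_LIMSEQ[OF L r0(1)])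
  then have e0: "inner w0 (w0 - w1) = L" using A LIMSEQ_unique by blast
  have B: "(c \<circ> r1) \<longlonglongrightarrow> inner w1 (w0 - w1)"
    using r1(2) unfolding weak_conv_def c_def o_def by blast
  have "(c \<circ> r1) \<longlonglongrightarrow> L" by (rule LIMSEQ_subseq_LIMSEQ[OF L r1(1)])
  then have e1: "inner w1 (w0 - w1) = L" using B LIMSEQ_unique by blast
  have "inner (w0 - w1) (w0 - w1) = 0" using e0 e1 by (simp add: inner_diff_left)
  then show ?thesis by simp
qed

lemma opial:
  fixes Z :: "nat \<Rightarrow> 'h::{real_inner,complete_space}" and S :: "'h set"
  assumes bnd: "\<And>n. norm (Z n) \<le> K"
    and conv: "\<And>w. w \<in> S \<Longrightarrow> convergent (\<lambda>n. norm (Z n - w))"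
    and clus: "\<And>r w. strict_mono r \<Longrightarrow> weak_conv (Z \<circ> r) w \<Longrightarrow> w \<in> S"
  shows "\<exists>w\<in>S. weak_conv Z w"
proof -
  obtain r0 :: "nat \<Rightarrow> nat" and w0 where r0: "strict_mono r0" "weak_conv (Z \<circ> r0) w0"
    using weak_compact[of Z K, OF bnd] by blast
  have w0S: "w0 \<in> S" using clus[OF r0] .
  have "weak_conv Z w0"
    unfolding weak_conv_def
  proof (rule allI, rule ccontr)
    fix y assume nc: "\<not> (\<lambda>n. inner (Z n) y) \<longlonglongrightarrow> inner w0 y"
    then obtain e where e: "0 < e" and unb: "\<And>no. \<exists>n\<ge>no. \<not> norm (inner (Z n) y - inner w0 y) < e"
      unfolding LIMSEQ_iff by blast
    have "infinite {n. e \<le> \<bar>inner (Z n) y - inner w0 y\<bar>}"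
      unfolding infinite_nat_iff_unbounded_le
    proof
      fix m
      obtain n where "n \<ge> m" "\<not> norm (inner (Z n) y - inner w0 y) < e" using unb by blast
      then show "\<exists>n\<ge>m. n \<in> {n. e \<le> \<bar>inner (Z n) y - inner w0 y\<bar>}" by auto
    qed
    from infinite_enumerate[OF this] obtain r1 :: "nat \<Rightarrow> nat" where r1: "strict_mono r1"
      and r1p: "\<And>k. e \<le> \<bar>inner (Z (r1 k)) y - inner w0 y\<bar>"
      by auto
    obtain r2 :: "nat \<Rightarrow> nat" and w1 where r2: "strict_mono r2" "weak_conv ((Z \<circ> r1) \<circ> r2) w1"
      using weak_compact[of "Z \<circ> r1" K] bnd by (metis comp_apply)
    have r12: "strict_mono (r1 \<circ> r2)" using r1 r2(1) by (rule strict_mono_o)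
    have wc: "weak_conv (Z \<circ> (r1 \<circ> r2)) w1" using r2(2) by (simp add: o_assoc)
    have w1S: "w1 \<in> S" using clus[OF r12 wc] .
    have "w0 = w1" using cluster_unique[OF conv[OF w0S] conv[OF w1S] r0 r12 wc] .
    then have "(\<lambda>k. inner (Z (r1 (r2 k))) y) \<longlonglongrightarrow> inner w0 y"
      using wc unfolding weak_conv_def o_def by blast
    then obtain no where "\<And>k. k \<ge> no \<Longrightarrow> norm (inner (Z (r1 (r2 k))) y - inner w0 y) < e"
      unfolding LIMSEQ_iff using e by blast
    from this[of no] r1p[of "r2 no"] show False by simp
  qed
  then show ?thesis using w0S by blast
qed




lemma weak_conv_close:
  fixes Z P :: "nat \<Rightarrow> 'h::real_inner"
  assumes "weak_conv Z w" "(\<lambda>n. norm (Z n - P n)) \<longlonglongrightarrow> 0"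
  shows "weak_conv P w"
  unfolding weak_conv_def
proof
  fix y
  have 1: "(\<lambda>n. inner (Z n) y) \<longlonglongrightarrow> inner w y" using assms(1) unfolding weak_conv_def by blast
  have "(\<lambda>n. inner (Z n - P n) y) \<longlonglongrightarrow> 0"
  proof (rule Lim_null_comparison)
    show "\<forall>\<^sub>F n in sequentially. norm (inner (Z n - P n) y) \<le> norm (Z n - P n) * norm y"
      by (intro always_eventually allI) (simp add: Cauchy_Schwarz_ineq2)
    show "(\<lambda>n. norm (Z n - P n) * norm y) \<longlonglongrightarrow> 0"
      using tendsto_mult_left_zero[OF assms(2), of "norm y"] by simp
  qed
  from tendsto_diff[OF 1 this] show "(\<lambda>n. inner (P n) y) \<longlonglongrightarrow> inner w y"
    by (simp add: inner_diff_left)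
qed

lemma weak_conv_fst:
  assumes "weak_conv (\<lambda>n. (x1 n, x2 n)) (w1, w2)"
  shows "weak_conv x1 w1" "weak_conv x2 w2"
proof -
  show "weak_conv x1 w1" unfolding weak_conv_def
  proof
    fix y
    have "(\<lambda>n. inner (x1 n, x2 n) (y, 0)) \<longlonglongrightarrow> inner (w1, w2) (y, 0)"
      using assms unfolding weak_conv_def by blast
    then show "(\<lambda>n. inner (x1 n) y) \<longlonglongrightarrow> inner w1 y" by simp
  qed
  show "weak_conv x2 w2" unfolding weak_conv_def
  proof
    fix y
    have "(\<lambda>n. inner (x1 n, x2 n) (0, y)) \<longlonglongrightarrow> inner (w1, w2) (0, y)"
      using assms unfolding weak_conv_def by blast
    then show "(\<lambda>n. inner (x2 n) y) \<longlonglongrightarrow> inner w2 y" by simp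
  qed
qed

lemma norm4:
  fixes a b c d :: "'h::real_normed_vector"
  shows "norm (a + b - c - d) \<le> norm a + norm b + norm c + norm d"
proof -
  have 1: "norm (a + b - c - d) \<le> norm (a + b - c) + norm d" by (rule norm_triangle_ineq4)
  have 2: "norm (a + b - c) \<le> norm (a + b) + norm c" by (rule norm_triangle_ineq4)
  have 3: "norm (a + b) \<le> norm a + norm b" by (rule norm_triangle_ineq)
  show ?thesis using 1 2 3 by linarith
qed

lemma norm_tri3:
  fixes a b w :: "'h::real_normed_vector"
  shows "norm (a - w) \<le> norm (a - b) + norm (b - w)"
  using norm_triangle_ineq[of "a - b" "b - w"] by simp




theorem proposition4p2:
  fixes f :: "('a::{real_inner,complete_space} \<times> 'b::{real_inner,complete_space}) \<Rightarrow> ereal"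
    and L :: "'a \<times> 'b \<Rightarrow> real"
    and G :: "'a \<times> 'b \<Rightarrow> 'a \<times> 'b"
    and \<kappa> \<epsilon> :: real
    and \<gamma> :: "nat \<Rightarrow> real"
    and a1 b1 c1 x1 y1 p1 q1 :: "nat \<Rightarrow> 'a"
    and a2 b2 c2 x2 y2 p2 q2 :: "nat \<Rightarrow> 'b"
  assumes chi_pos: "0 < \<kappa>"
    and f_Gamma0: "Gamma0 f"
    and L_grad: "\<And>z. GDERIV L z :> G z"
    and G_lip: "lipschitz_on \<kappa> UNIV G"
    and L_concave: "\<And>u1. concave_on UNIV (\<lambda>u2. L (u1, u2))"
    and L_convex: "\<And>u2. convex_on UNIV (\<lambda>u1. L (u1, u2))"
    and sol: "\<exists>z1 z2. (- fst (G (z1, z2)), snd (G (z1, z2))) \<in> subdiff f (z1, z2)"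
    and eps: "0 < \<epsilon>" "\<epsilon> < 1 / (\<kappa> + 1)"
    and gamma: "\<And>n. \<epsilon> \<le> \<gamma> n \<and> \<gamma> n \<le> (1 - \<epsilon>) / \<kappa>"
    and sa1: "summable (\<lambda>n. norm (a1 n))" and sb1: "summable (\<lambda>n. norm (b1 n))"
    and sc1: "summable (\<lambda>n. norm (c1 n))"
    and sa2: "summable (\<lambda>n. norm (a2 n))" and sb2: "summable (\<lambda>n. norm (b2 n))"
    and sc2: "summable (\<lambda>n. norm (c2 n))"
    and y1_def: "\<And>n. y1 n = x1 n - \<gamma> n *\<^sub>R (fst (G (x1 n, x2 n)) + a1 n)"
    and y2_def: "\<And>n. y2 n = x2 n + \<gamma> n *\<^sub>R (snd (G (x1 n, x2 n)) + a2 n)"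
    and p_def: "\<And>n. (p1 n, p2 n) = prox (\<lambda>z. ereal (\<gamma> n) * f z) (y1 n, y2 n) + (b1 n, b2 n)"
    and q1_def: "\<And>n. q1 n = p1 n - \<gamma> n *\<^sub>R (fst (G (p1 n, p2 n)) + c1 n)"
    and q2_def: "\<And>n. q2 n = p2 n + \<gamma> n *\<^sub>R (snd (G (p1 n, p2 n)) + c2 n)"
    and x1_step: "\<And>n. x1 (Suc n) = x1 n - y1 n + q1 n"
    and x2_step: "\<And>n. x2 (Suc n) = x2 n - y2 n + q2 n"
  shows "\<exists>xb1 xb2.
           xb1 \<in> Argmin (\<lambda>x. f (x, xb2) + ereal (L (x, xb2))) \<and>
           xb2 \<in> Argmin (\<lambda>x. f (xb1, x) - ereal (L (xb1, x))) \<and>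
           weak_conv x1 xb1 \<and> weak_conv p1 xb1 \<and>
           weak_conv x2 xb2 \<and> weak_conv p2 xb2"
proof -
  interpret LG L G using L_grad L_concave L_convex by unfold_locales auto
  have pf: "proper_fun f" using f_Gamma0 unfolding Gamma0_def by auto
  define Z where "Z n = (x1 n, x2 n)" for n
  define P where "P n = (p1 n, p2 n)" for n
  define A where "A n = (a1 n, - a2 n)" for n
  define C where "C n = (c1 n, - c2 n)" for n
  define Bn where "Bn n = (b1 n, b2 n)" for n
  define prx where "prx n y = prox (\<lambda>z. ereal (\<gamma> n) * f z) y" for n y
  define \<Gamma> where "\<Gamma> = (1 - \<epsilon>) / \<kappa>"
  have gpos: "0 < \<gamma> n" for n using gamma[of n] eps by linarith
  have gle: "\<gamma> n \<le> \<Gamma>" for n using gamma[of n] unfolding \<Gamma>_def by simp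
  have eps1: "\<epsilon> < 1"
  proof -
    have "1 / (\<kappa> + 1) < 1" using chi_pos by simp
    then show ?thesis using eps by linarith
  qed
  have gk: "\<gamma> n * \<kappa> \<le> 1 - \<epsilon>" for n
    using mult_right_mono[OF gle[of n], of \<kappa>] chi_pos unfolding \<Gamma>_def by simp
  have gk0: "0 \<le> \<gamma> n * \<kappa>" for n using gpos[of n] chi_pos by simp
  have gk1: "\<gamma> n * \<kappa> \<le> 1" for n using gk[of n] eps by linarith
  have negB: "- B w = (- fst (G w), snd (G w))" for w unfolding B_def by simp
  define S where "S = {w. - B w \<in> subdiff f w}"
  obtain z0 where z0: "- B z0 \<in> subdiff f z0" using sol negB by (metis)
  have z0S: "z0 \<in> S" using z0 unfolding S_def by simp
  have Blip: "norm (B u - B v) \<le> \<kappa> * norm (u - v)" for u v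
  proof -
    have "norm (B u - B v) = norm (G u - G v)"
      unfolding B_def by (cases "G u", cases "G v") (simp add: norm_Pair norm_minus_commute)
    also have "\<dots> \<le> \<kappa> * norm (u - v)"
      using G_lip unfolding lipschitz_on_def dist_norm by blast
    finally show ?thesis .
  qed
  have prox_sub: "(1/\<gamma> n) *\<^sub>R (y - prx n y) \<in> subdiff f (prx n y)" for n y
    unfolding prx_def by (rule prox_char[OF f_Gamma0 z0 gpos])
  have prox_ne: "norm (prx n y - prx n y') \<le> norm (y - y')" for n y y'
  proof -
    have m: "0 \<le> inner (prx n y - prx n y') ((1/\<gamma> n) *\<^sub>R (y - prx n y) - (1/\<gamma> n) *\<^sub>R (y' - prx n y'))"
      by (rule subdiff_mono[OF pf prox_sub prox_sub])
    have "0 \<le> inner (prx n y - prx n y') ((y - prx n y) - (y' - prx n y'))"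
      using m gpos[of n] by (simp add: scaleR_diff_right[symmetric] zero_le_divide_iff)
    then have "(norm (prx n y - prx n y'))\<^sup>2 \<le> inner (prx n y - prx n y') (y - y')"
      by (simp add: power2_norm_eq_inner inner_diff_right algebra_simps)
    also have "\<dots> \<le> norm (prx n y - prx n y') * norm (y - y')"
      using Cauchy_Schwarz_ineq2 abs_le_iff by blast
    finally have "norm (prx n y - prx n y') * norm (prx n y - prx n y') \<le> norm (prx n y - prx n y') * norm (y - y')"
      by (simp add: power2_eq_square)
    then show ?thesis
      by (metis mult_le_cancel_left norm_ge_zero order.trans not_le mult_zero_left)
  qed
  have Yeq: "(y1 n, y2 n) = Z n - \<gamma> n *\<^sub>R (B (Z n) + A n)" for n
    unfolding Z_def A_def B_def y1_def y2_def by (simp add: algebra_simps)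
  have Peq: "P n = prx n (Z n - \<gamma> n *\<^sub>R (B (Z n) + A n)) + Bn n" for n
    unfolding P_def prx_def Bn_def Yeq[symmetric] by (rule p_def)
  have Zs: "Z (Suc n) = P n + \<gamma> n *\<^sub>R (B (Z n) + A n) - \<gamma> n *\<^sub>R (B (P n) + C n)" for n
    unfolding Z_def P_def A_def C_def B_def x1_step x2_step y1_def y2_def q1_def q2_def
    by (simp add: algebra_simps)
  define PE where "PE n = prx n (Z n - \<gamma> n *\<^sub>R B (Z n))" for n
  define XE where "XE n = PE n + \<gamma> n *\<^sub>R (B (Z n) - B (PE n))" for n
  define \<delta> where "\<delta> = 1 - (1 - \<epsilon>)\<^sup>2"
  have d0: "0 < \<delta>"
  proof -
    have "(1 - \<epsilon>)\<^sup>2 < 1" using eps eps1 by (subst power_less_one_iff) auto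
    then show ?thesis unfolding \<delta>_def by simp
  qed
  have PEsub: "(1/\<gamma> n) *\<^sub>R ((Z n - \<gamma> n *\<^sub>R B (Z n)) - PE n) \<in> subdiff f (PE n)" for n
    unfolding PE_def by (rule prox_sub)
  have tseng: "(norm (XE n - w))\<^sup>2 \<le> (norm (Z n - w))\<^sup>2 - \<delta> * (norm (Z n - PE n))\<^sup>2"
    if wS: "w \<in> S" for n w
  proof -
    have ws: "- B w \<in> subdiff f w" using wS unfolding S_def by simp
    have 1: "(norm (XE n - w))\<^sup>2 \<le> (norm (Z n - w))\<^sup>2 - (1 - (\<gamma> n * \<kappa>)\<^sup>2) * (norm (Z n - PE n))\<^sup>2"
      unfolding XE_def
      by (rule tseng_step[OF pf B_mono Blip _ gpos PEsub ws]) (use chi_pos in simp)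
    have "(\<gamma> n * \<kappa>)\<^sup>2 \<le> (1 - \<epsilon>)\<^sup>2" using gk[of n] gk0[of n] by (rule power_mono)
    then have "\<delta> \<le> 1 - (\<gamma> n * \<kappa>)\<^sup>2" unfolding \<delta>_def by simp
    then have "\<delta> * (norm (Z n - PE n))\<^sup>2 \<le> (1 - (\<gamma> n * \<kappa>)\<^sup>2) * (norm (Z n - PE n))\<^sup>2"
      by (intro mult_right_mono) auto
    then show ?thesis using 1 by linarith
  qed
  have XEle: "norm (XE n - w) \<le> norm (Z n - w)" if "w \<in> S" for n w
  proof -
    have "0 \<le> \<delta> * (norm (Z n - PE n))\<^sup>2" using d0 by simp
    then have "(norm (XE n - w))\<^sup>2 \<le> (norm (Z n - w))\<^sup>2" using tseng[OF that, of n] by linarith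
    then show ?thesis using power2_le_imp_le norm_ge_zero by blast
  qed
  define e where "e n = 2 * (\<Gamma> * norm (A n) + norm (Bn n)) + \<Gamma> * (norm (A n) + norm (C n))" for n
  have G0: "0 \<le> \<Gamma>" unfolding \<Gamma>_def using eps1 chi_pos by simp
  have PPE: "norm (P n - PE n) \<le> \<Gamma> * norm (A n) + norm (Bn n)" for n
  proof -
    have "P n - PE n = (prx n (Z n - \<gamma> n *\<^sub>R (B (Z n) + A n)) - PE n) + Bn n"
      unfolding Peq by simp
    then have "norm (P n - PE n) \<le> norm (prx n (Z n - \<gamma> n *\<^sub>R (B (Z n) + A n)) - PE n) + norm (Bn n)"
      by (metis norm_triangle_ineq)
    also have "norm (prx n (Z n - \<gamma> n *\<^sub>R (B (Z n) + A n)) - PE n) \<le> norm ((Z n - \<gamma> n *\<^sub>R (B (Z n) + A n)) - (Z n - \<gamma> n *\<^sub>R B (Z n)))"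
      unfolding PE_def by (rule prox_ne)
    also have "norm ((Z n - \<gamma> n *\<^sub>R (B (Z n) + A n)) - (Z n - \<gamma> n *\<^sub>R B (Z n))) = \<gamma> n * norm (A n)"
      using gpos[of n] by (simp add: algebra_simps)
    also have "\<gamma> n * norm (A n) \<le> \<Gamma> * norm (A n)" using gle[of n] by (intro mult_right_mono) auto
    finally show ?thesis by simp
  qed
  have err: "norm (Z (Suc n) - XE n) \<le> e n" for n
  proof -
    have eq: "Z (Suc n) - XE n = (P n - PE n) + \<gamma> n *\<^sub>R A n - \<gamma> n *\<^sub>R (B (P n) - B (PE n)) - \<gamma> n *\<^sub>R C n"
      unfolding Zs XE_def by (simp add: algebra_simps)
    have 1: "norm (Z (Suc n) - XE n) \<le> norm (P n - PE n) + norm (\<gamma> n *\<^sub>R A n) + norm (\<gamma> n *\<^sub>R (B (P n) - B (PE n))) + norm (\<gamma> n *\<^sub>R C n)"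
      unfolding eq by (rule norm4)
    have 2: "norm (\<gamma> n *\<^sub>R A n) \<le> \<Gamma> * norm (A n)"
      using gpos[of n] gle[of n] by (simp add: mult_right_mono)
    have 3: "norm (\<gamma> n *\<^sub>R C n) \<le> \<Gamma> * norm (C n)"
      using gpos[of n] gle[of n] by (simp add: mult_right_mono)
    have "norm (\<gamma> n *\<^sub>R (B (P n) - B (PE n))) \<le> \<gamma> n * (\<kappa> * norm (P n - PE n))"
      using gpos[of n] Blip[of "P n" "PE n"] by (simp add: mult_left_mono)
    also have "\<dots> = (\<gamma> n * \<kappa>) * norm (P n - PE n)" by simp
    also have "\<dots> \<le> norm (P n - PE n)" using mult_right_mono[OF gk1[of n] norm_ge_zero[of "P n - PE n"]] by simp
    finally have 4: "norm (\<gamma> n *\<^sub>R (B (P n) - B (PE n))) \<le> norm (P n - PE n)" .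
    show ?thesis using 1 2 3 4 PPE[of n] unfolding e_def by (simp add: algebra_simps)
  qed
  have e0: "0 \<le> e n" for n unfolding e_def using G0 by simp
  have sA: "summable (\<lambda>n. norm (A n))"
    by (rule summable_comparison_test[OF _ summable_add[OF sa1 sa2]])
       (auto simp: A_def intro!: exI[of _ 0] order_trans[OF norm_Pair_le])
  have sC: "summable (\<lambda>n. norm (C n))"
    by (rule summable_comparison_test[OF _ summable_add[OF sc1 sc2]])
       (auto simp: C_def intro!: exI[of _ 0] order_trans[OF norm_Pair_le])
  have sB: "summable (\<lambda>n. norm (Bn n))"
    by (rule summable_comparison_test[OF _ summable_add[OF sb1 sb2]])
       (auto simp: Bn_def intro!: exI[of _ 0] order_trans[OF norm_Pair_le])
  have se: "summable e"
    unfolding e_def by (intro summable_add summable_mult sA sB sC)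
  have fej: "norm (Z (Suc n) - w) \<le> norm (Z n - w) + e n" if "w \<in> S" for n w
    using norm_tri3[of "Z (Suc n)" w "XE n"] err[of n] XEle[OF that, of n] by linarith
  have convS: "convergent (\<lambda>n. norm (Z n - w))" if "w \<in> S" for w
    by (rule quasi_fejer[OF _ fej[OF that] e0 se]) simp
  obtain K0 where K0: "\<And>n. norm (Z n - z0) \<le> K0"
    using convergent_imp_Bseq[OF convS[OF z0S]] unfolding Bseq_def by auto
  have bndZ: "norm (Z n) \<le> K0 + norm z0" for n
    using norm_triangle_ineq[of "Z n - z0" z0] K0[of n] by simp
  have ZPE0: "(\<lambda>n. norm (Z n - PE n)) \<longlonglongrightarrow> 0"
  proof -
    define a where "a n = norm (Z n - z0)" for n
    obtain \<alpha> where \<alpha>: "a \<longlonglongrightarrow> \<alpha>" using convS[OF z0S] unfolding a_def convergent_def by auto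
    have e_lim: "e \<longlonglongrightarrow> 0" by (rule summable_LIMSEQ_zero[OF se])
    have key: "\<delta> * (norm (Z n - PE n))\<^sup>2 \<le> (a n)\<^sup>2 - (a (Suc n))\<^sup>2 + 2 * K0 * e n + (e n)\<^sup>2" for n
    proof -
      define u where "u = norm (XE n - z0)"
      have u0: "0 \<le> u" unfolding u_def by simp
      have uK: "u \<le> K0" using XEle[OF z0S, of n] K0[of n] unfolding u_def by linarith
      have h1: "a (Suc n) \<le> u + e n"
        using norm_tri3[of "Z (Suc n)" z0 "XE n"] err[of n] unfolding a_def u_def by linarith
      have "(a (Suc n))\<^sup>2 \<le> (u + e n)\<^sup>2" using h1 by (intro power_mono) (auto simp: a_def)
      also have "\<dots> = u\<^sup>2 + 2 * u * e n + (e n)\<^sup>2" by (simp add: power2_sum)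
      also have "2 * u * e n \<le> 2 * K0 * e n" using uK e0[of n] by (intro mult_right_mono) auto
      then have "u\<^sup>2 + 2 * u * e n + (e n)\<^sup>2 \<le> u\<^sup>2 + 2 * K0 * e n + (e n)\<^sup>2" by simp
      finally have h2: "(a (Suc n))\<^sup>2 \<le> u\<^sup>2 + 2 * K0 * e n + (e n)\<^sup>2" .
      have "u\<^sup>2 \<le> (a n)\<^sup>2 - \<delta> * (norm (Z n - PE n))\<^sup>2" using tseng[OF z0S, of n] unfolding u_def a_def .
      then show ?thesis using h2 by linarith
    qed
    have lim0: "(\<lambda>n. (a n)\<^sup>2 - (a (Suc n))\<^sup>2 + 2 * K0 * e n + (e n)\<^sup>2) \<longlonglongrightarrow> \<alpha>\<^sup>2 - \<alpha>\<^sup>2 + 2 * K0 * 0 + 0\<^sup>2"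
      by (intro tendsto_intros \<alpha> e_lim LIMSEQ_Suc[OF \<alpha>])
    have lim0': "(\<lambda>n. (a n)\<^sup>2 - (a (Suc n))\<^sup>2 + 2 * K0 * e n + (e n)\<^sup>2) \<longlonglongrightarrow> 0"
      using lim0 by simp
    have "(\<lambda>n. \<delta> * (norm (Z n - PE n))\<^sup>2) \<longlonglongrightarrow> 0"
    proof (rule real_tendsto_sandwich[OF _ _ tendsto_const lim0'])
      show "\<forall>\<^sub>F n in sequentially. 0 \<le> \<delta> * (norm (Z n - PE n))\<^sup>2" using d0 by simp
      show "\<forall>\<^sub>F n in sequentially. \<delta> * (norm (Z n - PE n))\<^sup>2 \<le> (a n)\<^sup>2 - (a (Suc n))\<^sup>2 + 2 * K0 * e n + (e n)\<^sup>2"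
        using key by simp
    qed
    then have "(\<lambda>n. (1 / \<delta>) * (\<delta> * (norm (Z n - PE n))\<^sup>2)) \<longlonglongrightarrow> (1/\<delta>) * 0"
      by (intro tendsto_intros)
    then have "(\<lambda>n. (norm (Z n - PE n))\<^sup>2) \<longlonglongrightarrow> 0" using d0 by simp
    then have "(\<lambda>n. sqrt ((norm (Z n - PE n))\<^sup>2)) \<longlonglongrightarrow> sqrt 0" by (intro tendsto_intros)
    then show ?thesis by simp
  qed
  have PPE0: "(\<lambda>n. norm (P n - PE n)) \<longlonglongrightarrow> 0"
  proof (rule real_tendsto_sandwich[OF _ _ tendsto_const])
    show "\<forall>\<^sub>F n in sequentially. 0 \<le> norm (P n - PE n)" by simp
    show "\<forall>\<^sub>F n in sequentially. norm (P n - PE n) \<le> \<Gamma> * norm (A n) + norm (Bn n)" using PPE by simp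
    show "(\<lambda>n. \<Gamma> * norm (A n) + norm (Bn n)) \<longlonglongrightarrow> 0"
      using tendsto_add[OF tendsto_mult_right_zero[OF summable_LIMSEQ_zero[OF sA]] summable_LIMSEQ_zero[OF sB]]
      by simp
  qed
  have ZP0: "(\<lambda>n. norm (Z n - P n)) \<longlonglongrightarrow> 0"
  proof (rule real_tendsto_sandwich[OF _ _ tendsto_const])
    show "\<forall>\<^sub>F n in sequentially. 0 \<le> norm (Z n - P n)" by simp
    show "\<forall>\<^sub>F n in sequentially. norm (Z n - P n) \<le> norm (Z n - PE n) + norm (P n - PE n)"
      using norm_tri3[of "Z _" "P _" "PE _"] by (simp add: norm_minus_commute)
    show "(\<lambda>n. norm (Z n - PE n) + norm (P n - PE n)) \<longlonglongrightarrow> 0"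
      using tendsto_add[OF ZPE0 PPE0] by simp
  qed
  have clus: "w \<in> S" if r: "strict_mono r" and wc: "weak_conv (Z \<circ> r) w" for r w
  proof -
    define yw where "yw = w - \<epsilon> *\<^sub>R B w"
    define w' where "w' = prox (\<lambda>z. ereal \<epsilon> * f z) yw"
    define v where "v = (1/\<epsilon>) *\<^sub>R (yw - w')"
    have vsub: "v \<in> subdiff f w'" unfolding v_def w'_def by (rule prox_char[OF f_Gamma0 z0 eps(1)])
    define u where "u k = (1/\<gamma> k) *\<^sub>R ((Z k - \<gamma> k *\<^sub>R B (Z k)) - PE k)" for k
    define s where "s k = u k + B (PE k)" for k
    define c where "c = v + B w'"
    have ineq: "0 \<le> inner (PE k - w') (s k) - inner (PE k - w') c" for k
    proof -
      have m1: "0 \<le> inner (PE k - w') (u k - v)" unfolding u_def by (rule subdiff_mono[OF pf PEsub vsub])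
      have m2: "0 \<le> inner (PE k - w') (B (PE k) - B w')" by (rule B_mono)
      have "inner (PE k - w') (u k - v) + inner (PE k - w') (B (PE k) - B w') = inner (PE k - w') (s k) - inner (PE k - w') c"
        unfolding s_def c_def by (simp add: inner_add_right inner_diff_right)
      then show ?thesis using m1 m2 by linarith
    qed
    have s_eq: "s k = (1/\<gamma> k) *\<^sub>R (Z k - PE k) - (B (Z k) - B (PE k))" for k
      unfolding s_def u_def using gpos[of k] by (simp add: algebra_simps)
    have s_bnd: "norm (s k) \<le> (1/\<epsilon> + \<kappa>) * norm (Z k - PE k)" for k
    proof -
      have 1: "norm (s k) \<le> norm ((1/\<gamma> k) *\<^sub>R (Z k - PE k)) + norm (B (Z k) - B (PE k))"
        unfolding s_eq by (rule norm_triangle_ineq4)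
      have ig: "1/\<gamma> k \<le> 1/\<epsilon>"
        by (rule divide_left_mono) (use gamma[of k] eps gpos[of k] in auto)
      have 2: "norm ((1/\<gamma> k) *\<^sub>R (Z k - PE k)) \<le> (1/\<epsilon>) * norm (Z k - PE k)"
        using gpos[of k] mult_right_mono[OF ig norm_ge_zero[of "Z k - PE k"]] by simp
      have 3: "norm (B (Z k) - B (PE k)) \<le> \<kappa> * norm (Z k - PE k)" by (rule Blip)
      show ?thesis using 1 2 3 by (simp add: distrib_right)
    qed
    have s0: "(\<lambda>k. norm (s k)) \<longlonglongrightarrow> 0"
    proof (rule real_tendsto_sandwich[OF _ _ tendsto_const])
      show "\<forall>\<^sub>F n in sequentially. 0 \<le> norm (s n)" by simp
      show "\<forall>\<^sub>F n in sequentially. norm (s n) \<le> (1/\<epsilon> + \<kappa>) * norm (Z n - PE n)" using s_bnd by simp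
      show "(\<lambda>n. (1/\<epsilon> + \<kappa>) * norm (Z n - PE n)) \<longlonglongrightarrow> 0"
        using tendsto_mult_right_zero[OF ZPE0] by simp
    qed
    obtain Kp where Kp: "\<And>k. norm (norm (Z k - PE k)) \<le> Kp"
      using convergent_imp_Bseq[of "\<lambda>k. norm (Z k - PE k)"] ZPE0 unfolding Bseq_def convergent_def by blast
    define M where "M = Kp + (K0 + norm z0) + norm w'"
    have PEb: "norm (PE k - w') \<le> M" for k
    proof -
      have "PE k - w' = - (Z k - PE k) + Z k - w'" by simp
      then have "norm (PE k - w') \<le> norm (Z k - PE k) + norm (Z k) + norm w'"
        by (metis norm4[of "- (Z k - PE k)" "Z k" w' 0] norm_minus_cancel norm_zero add_0_right diff_zero)
      then show ?thesis using Kp[of k] bndZ[of k] unfolding M_def by simp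
    qed
    have t1: "(\<lambda>k. inner (PE (r k) - w') (s (r k))) \<longlonglongrightarrow> 0"
    proof (rule Lim_null_comparison)
      show "\<forall>\<^sub>F k in sequentially. norm (inner (PE (r k) - w') (s (r k))) \<le> M * norm (s (r k))"
      proof (intro always_eventually allI)
        fix k
        have "norm (inner (PE (r k) - w') (s (r k))) \<le> norm (PE (r k) - w') * norm (s (r k))"
          using Cauchy_Schwarz_ineq2 by simp
        also have "\<dots> \<le> M * norm (s (r k))" using PEb by (intro mult_right_mono) auto
        finally show "norm (inner (PE (r k) - w') (s (r k))) \<le> M * norm (s (r k))" .
      qed
      have "(\<lambda>k. norm (s (r k))) \<longlonglongrightarrow> 0" using LIMSEQ_subseq_LIMSEQ[OF s0 r] by (simp add: o_def)
      then show "(\<lambda>k. M * norm (s (r k))) \<longlonglongrightarrow> 0" using tendsto_mult_right_zero by blast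
    qed
    have t2: "(\<lambda>k. inner (PE (r k) - w') c) \<longlonglongrightarrow> inner (w - w') c"
    proof -
      have a: "(\<lambda>k. inner (Z (r k)) c) \<longlonglongrightarrow> inner w c" using wc unfolding weak_conv_def o_def by blast
      have b: "(\<lambda>k. inner (Z (r k) - PE (r k)) c) \<longlonglongrightarrow> 0"
      proof (rule Lim_null_comparison)
        show "\<forall>\<^sub>F k in sequentially. norm (inner (Z (r k) - PE (r k)) c) \<le> norm (Z (r k) - PE (r k)) * norm c"
          by (intro always_eventually allI) (simp add: Cauchy_Schwarz_ineq2)
        have "(\<lambda>k. norm (Z (r k) - PE (r k))) \<longlonglongrightarrow> 0" using LIMSEQ_subseq_LIMSEQ[OF ZPE0 r] by (simp add: o_def)
        then show "(\<lambda>k. norm (Z (r k) - PE (r k)) * norm c) \<longlonglongrightarrow> 0" using tendsto_mult_left_zero by blast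
      qed
      have "(\<lambda>k. inner (Z (r k)) c - inner (Z (r k) - PE (r k)) c - inner w' c) \<longlonglongrightarrow> inner w c - 0 - inner w' c"
        by (intro tendsto_intros a b)
      then show ?thesis by (simp add: inner_diff_left)
    qed
    have "(\<lambda>k. inner (PE (r k) - w') (s (r k)) - inner (PE (r k) - w') c) \<longlonglongrightarrow> 0 - inner (w - w') c"
      by (intro tendsto_intros t1 t2)
    then have c_le: "inner (w - w') c \<le> 0"
      using LIMSEQ_le_const[of _ "0 - inner (w - w') c" 0] ineq by force
    have c_eq: "c = (1/\<epsilon>) *\<^sub>R (w - w') - (B w - B w')"
      unfolding c_def v_def yw_def using eps(1) by (simp add: algebra_simps)
    have "inner (w - w') (B w - B w') \<le> norm (w - w') * norm (B w - B w')"
      using Cauchy_Schwarz_ineq2 abs_le_iff by blast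
    also have "\<dots> \<le> norm (w - w') * (\<kappa> * norm (w - w'))"
      using Blip by (intro mult_left_mono) auto
    finally have cb: "inner (w - w') (B w - B w') \<le> \<kappa> * (norm (w - w'))\<^sup>2"
      by (simp add: power2_eq_square mult.commute mult.left_commute)
    have "inner (w - w') c = (1/\<epsilon>) * (norm (w - w'))\<^sup>2 - inner (w - w') (B w - B w')"
      unfolding c_eq by (simp add: inner_diff_right power2_norm_eq_inner)
    then have "(1/\<epsilon> - \<kappa>) * (norm (w - w'))\<^sup>2 \<le> 0"
      using c_le cb by (simp add: algebra_simps)
    moreover have "0 < 1/\<epsilon> - \<kappa>"
    proof -
      have "\<epsilon> * (\<kappa> + 1) < 1" using eps chi_pos by (simp add: less_divide_eq)
      then have "\<epsilon> * \<kappa> < 1" using eps by (simp add: algebra_simps)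
      then have "\<kappa> < 1/\<epsilon>" using eps by (simp add: less_divide_eq mult.commute)
      then show ?thesis by simp
    qed
    ultimately have "(norm (w - w'))\<^sup>2 \<le> 0" by (simp add: mult_le_0_iff)
    then have ww: "w' = w" by simp
    have "v = - B w" unfolding v_def yw_def ww using eps(1) by simp
    then show ?thesis using vsub ww unfolding S_def by simp
  qed
  have ex: "\<exists>w\<in>S. weak_conv Z w"
  proof (rule opial)
    show "\<And>n. norm (Z n) \<le> K0 + norm z0" by (rule bndZ)
    show "\<And>w. w \<in> S \<Longrightarrow> convergent (\<lambda>n. norm (Z n - w))" by (rule convS)
    show "\<And>r w. strict_mono r \<Longrightarrow> weak_conv (Z \<circ> r) w \<Longrightarrow> w \<in> S" by (rule clus)
  qed
  obtain w where wS: "w \<in> S" and wc: "weak_conv Z w" using ex by blast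
  obtain xb1 xb2 where w: "w = (xb1, xb2)" by fastforce
  have wsol: "(- fst (G (xb1, xb2)), snd (G (xb1, xb2))) \<in> subdiff f (xb1, xb2)"
    using wS negB unfolding S_def w by simp
  have wcP: "weak_conv P w" by (rule weak_conv_close[OF wc ZP0])
  show ?thesis
    using argmin_from_sol[OF pf wsol] weak_conv_fst[of x1 x2 xb1 xb2] weak_conv_fst[of p1 p2 xb1 xb2]
      wc wcP unfolding w Z_def[abs_def] P_def[abs_def] by blast
qed



end
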